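(* Let $\mu$ be a probability measure on $\mathbb{R}$. If there exists a probability measure $\nu$ on $\mathbb{R}$ with support included in $(-\infty,0]$ such that $\mu*\nu\in\mathscr{C}$, then $\mu\in\mathscr{C}$.
   Context: $\mathscr{C}$ is the set of probability measures $\mu$ on $\mathbb{R}$ such that every probability measure $\mu_1$ on $\mathbb{R}$ with $\mu_1^{*n}=\mu^{*n}$ on the Borel subsets of $[0,\infty)$ for all $n\ge1$ ($*n$ = $n$-fold convolution power) satisfies $\mu_1=\mu$. *)

theory Defs
  imports "HOL-Probability.Probability"
begin

definition prob_measure_real :: "real measure \<Rightarrow> bool" where
  "prob_measure_real M \<longleftrightarrow> prob_space M \<and> sets M = sets borel"

fun conv_power :: "real measure \<Rightarrow> nat \<Rightarrow> real measure" where
  "conv_power M 0 = return borel 0"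
| "conv_power M (Suc n) = convolution M (conv_power M n)"

definition measure_support :: "real measure \<Rightarrow> real set" where
  "measure_support M = {x. \<forall>e>0. emeasure M (ball x e) \<noteq> 0}"

definition classC :: "real measure set" where
  "classC = {\<mu>. prob_measure_real \<mu> \<and>
     (\<forall>\<mu>1. prob_measure_real \<mu>1 \<and>
        (\<forall>n\<ge>1. \<forall>A\<in>sets borel. A \<subseteq> {0..} \<longrightarrow>
            emeasure (conv_power \<mu>1 n) A = emeasure (conv_power \<mu> n) A)
        \<longrightarrow> \<mu>1 = \<mu>)}"

end

theory Submission
  imports Defs
begin


lemma pmr_finite: "prob_measure_real M \<Longrightarrow> finite_measure M"
  unfolding prob_measure_real_def by (auto intro: prob_space.finite_measure)

lemma pmr_sets: "prob_measure_real M \<Longrightarrow> sets M = sets borel"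
  unfolding prob_measure_real_def by auto

lemma pmr_space: "prob_measure_real M \<Longrightarrow> space M = UNIV"
  using sets_eq_imp_space_eq[OF pmr_sets] by auto

lemma pmr_conv:
  assumes "prob_measure_real M" "prob_measure_real N"
  shows "prob_measure_real (convolution M N)"
proof -
  interpret M: prob_space M using assms unfolding prob_measure_real_def by auto
  interpret N: prob_space N using assms unfolding prob_measure_real_def by auto
  interpret P: pair_prob_space M N ..
  have [measurable_cong]: "sets M = sets borel" "sets N = sets borel" using assms pmr_sets by auto
  show ?thesis unfolding prob_measure_real_def convolution_def
    by (auto intro!: P.prob_space_distr)
qed

lemma pmr_return: "prob_measure_real (return borel (0::real))"
  unfolding prob_measure_real_def by (auto intro: prob_space_return)

lemma pmr_power: "prob_measure_real M \<Longrightarrow> prob_measure_real (conv_power M n)"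
  by (induction n) (auto intro: pmr_conv pmr_return)

lemma conv_return_right:
  assumes "prob_measure_real X"
  shows "convolution X (return borel 0) = X"
proof (rule measure_eqI)
  show "sets (convolution X (return borel 0)) = sets X" using pmr_sets[OF assms] by simp
  fix A assume "A \<in> sets (convolution X (return borel 0))"
  then have A: "A \<in> sets borel" by simp
  have "emeasure (convolution X (return borel 0)) A = \<integral>\<^sup>+x. emeasure (return borel 0) {a. a + x \<in> A} \<partial>X"
    by (rule convolution_emeasure) (use A assms pmr_sets pmr_space pmr_finite pmr_return in auto)
  also have "\<dots> = \<integral>\<^sup>+x. indicator A x \<partial>X"
  proof (rule nn_integral_cong)
    fix x :: real
    have [measurable]: "A \<in> sets borel" by (rule A)
    have "{a::real. a + x \<in> A} \<in> sets borel" by measurable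
    then show "emeasure (return borel 0) {a. a + x \<in> A} = indicator A x"
      by (subst emeasure_return) (auto simp: indicator_def)
  qed
  also have "\<dots> = emeasure X A" using A pmr_sets[OF assms] by simp
  finally show "emeasure (convolution X (return borel 0)) A = emeasure X A" .
qed

lemma conv_comm: "prob_measure_real M \<Longrightarrow> prob_measure_real N \<Longrightarrow> convolution M N = convolution N M"
  by (rule convolution_commutative) (auto simp: pmr_finite pmr_sets)

lemma conv_assoc: "prob_measure_real M \<Longrightarrow> prob_measure_real N \<Longrightarrow> prob_measure_real L \<Longrightarrow>
   convolution L (convolution M N) = convolution (convolution L M) N"
  by (rule convolution_associative) (auto simp: pmr_finite pmr_sets)

lemma conv_power_conv:
  assumes "prob_measure_real M" "prob_measure_real N"
  shows "conv_power (convolution M N) n = convolution (conv_power M n) (conv_power N n)"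
proof (induction n)
  case 0
  then show ?case using conv_return_right[OF pmr_return] by simp
next
  case (Suc n)
  let ?Mn = "conv_power M n" and ?Nn = "conv_power N n"
  have pM: "prob_measure_real ?Mn" "prob_measure_real ?Nn" using assms pmr_power by auto
  have "conv_power (convolution M N) (Suc n) = convolution (convolution M N) (convolution ?Mn ?Nn)"
    using Suc by simp
  also have "\<dots> = convolution M (convolution N (convolution ?Mn ?Nn))"
    using conv_assoc assms pM pmr_conv by metis
  also have "convolution N (convolution ?Mn ?Nn) = convolution ?Mn (convolution N ?Nn)"
    using conv_assoc conv_comm assms pM pmr_conv by metis
  also have "convolution M (convolution ?Mn (convolution N ?Nn)) = convolution (convolution M ?Mn) (convolution N ?Nn)"
    using conv_assoc assms pM pmr_conv by metis
  finally show ?case by simp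
qed


lemma support_null:
  assumes "prob_measure_real \<nu>" "measure_support \<nu> \<subseteq> {..0}"
  shows "emeasure \<nu> {0<..} = 0"
proof -
  have sets: "sets \<nu> = sets borel" using pmr_sets[OF assms(1)] .
  define F where "F = {ball y e | y e. e > 0 \<and> emeasure \<nu> (ball y e) = 0}"
  have "\<And>S. S \<in> F \<Longrightarrow> open S" unfolding F_def by auto
  then obtain F' where F': "F' \<subseteq> F" "countable F'" "\<Union>F' = \<Union>F" by (rule Lindelof)
  have sub: "{0<..} \<subseteq> \<Union>F"
  proof
    fix y :: real assume "y \<in> {0<..}"
    then have "y \<notin> measure_support \<nu>" using assms(2) by auto
    then obtain e where "e > 0" "emeasure \<nu> (ball y e) = 0" unfolding measure_support_def by auto
    then have "ball y e \<in> F" unfolding F_def by auto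
    moreover have "y \<in> ball y e" using \<open>e > 0\<close> by simp
    ultimately show "y \<in> \<Union>F" by blast
  qed
  have "(\<Union>S\<in>F'. S) \<in> null_sets \<nu>"
  proof (rule null_sets_UN')
    show "countable F'" by fact
    fix S assume "S \<in> F'"
    then have "S \<in> F" using F' by auto
    then show "S \<in> null_sets \<nu>" unfolding F_def using sets by auto
  qed
  then have "\<Union>F \<in> null_sets \<nu>" using F' by simp
  moreover have "{0<..} \<in> sets \<nu>" using sets by simp
  ultimately show ?thesis using sub by (meson null_sets_subset null_setsD1)
qed

lemma AE_nonpos:
  assumes "prob_measure_real \<nu>" "emeasure \<nu> {0<..} = 0"
  shows "AE y in \<nu>. y \<le> (0::real)"
proof -
  have "{0<..} \<in> null_sets \<nu>" using assms pmr_sets[OF assms(1)] by auto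
  then show ?thesis
    by (rule AE_I') (auto simp: not_le)
qed

lemma power_null:
  assumes "prob_measure_real \<nu>" "emeasure \<nu> {0<..} = 0"
  shows "emeasure (conv_power \<nu> n) {0<..} = 0"
proof (induction n)
  case 0
  then show ?case by (simp add: emeasure_return)
next
  case (Suc n)
  have p: "prob_measure_real (conv_power \<nu> n)" using assms pmr_power by auto
  have "emeasure (conv_power \<nu> (Suc n)) {0<..} = emeasure (convolution \<nu> (conv_power \<nu> n)) {0<..}"
    by simp
  also have "\<dots> = \<integral>\<^sup>+x. emeasure (conv_power \<nu> n) {a. a + x \<in> {0<..}} \<partial>\<nu>"
    by (rule convolution_emeasure) (use assms p pmr_sets pmr_space pmr_finite in auto)
  also have "\<dots> = \<integral>\<^sup>+x. 0 \<partial>\<nu>"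
  proof (rule nn_integral_cong_AE)
    show "AE x in \<nu>. emeasure (conv_power \<nu> n) {a. a + x \<in> {0<..}} = 0"
      using AE_nonpos[OF assms]
    proof eventually_elim
      case (elim x)
      have "{a. a + x \<in> {0<..}} \<subseteq> {0<..}" using elim by auto
      moreover have "{a. a + x \<in> {0<..}} \<in> sets (conv_power \<nu> n)"
        using pmr_sets[OF p] by simp
      ultimately show ?case using Suc emeasure_mono[of "{a. a + x \<in> {0<..}}" "{0<..}" "conv_power \<nu> n"]
        by (auto simp: pmr_sets[OF p])
    qed
  qed
  finally show ?case by simp
qed

lemma agree_conv:
  assumes pA: "prob_measure_real A" and pB: "prob_measure_real B" and pQ: "prob_measure_real Q"
    and Q0: "emeasure Q {0<..} = 0"
    and agree: "\<And>S. S \<in> sets borel \<Longrightarrow> S \<subseteq> {0..} \<Longrightarrow> emeasure A S = emeasure B S"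
    and S: "S \<in> sets borel" "S \<subseteq> {0..}"
  shows "emeasure (convolution A Q) S = emeasure (convolution B Q) S"
proof -
  have "emeasure (convolution A Q) S = emeasure (convolution Q A) S" using conv_comm pA pQ by metis
  also have "\<dots> = \<integral>\<^sup>+x. emeasure A {a. a + x \<in> S} \<partial>Q"
    by (rule convolution_emeasure) (use S pA pQ pmr_sets pmr_space pmr_finite in auto)
  also have "\<dots> = \<integral>\<^sup>+x. emeasure B {a. a + x \<in> S} \<partial>Q"
  proof (rule nn_integral_cong_AE)
    show "AE x in Q. emeasure A {a. a + x \<in> S} = emeasure B {a. a + x \<in> S}"
      using AE_nonpos[OF pQ Q0]
    proof eventually_elim
      case (elim x)
      have [measurable]: "S \<in> sets borel" by (rule S)
      have "{a::real. a + x \<in> S} \<in> sets borel" by measurable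
      moreover have "{a. a + x \<in> S} \<subseteq> {0..}" using elim S(2) by force
      ultimately show ?case by (rule agree)
    qed
  qed
  also have "\<dots> = emeasure (convolution Q B) S"
    by (rule convolution_emeasure[symmetric]) (use S pB pQ pmr_sets pmr_space pmr_finite in auto)
  also have "\<dots> = emeasure (convolution B Q) S" using conv_comm pB pQ by metis
  finally show ?thesis .
qed


lemma agree_nn:
  assumes sA: "sets A = sets borel" and sB: "sets B = sets borel" and S: "S \<in> sets borel"
    and agree: "\<And>T. T \<in> sets borel \<Longrightarrow> T \<subseteq> S \<Longrightarrow> emeasure A T = emeasure B T"
    and g: "g \<in> borel_measurable borel"
  shows "(\<integral>\<^sup>+ x. indicator S x * g x \<partial>A) = (\<integral>\<^sup>+ x. indicator S x * g x \<partial>B)"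
proof -
  have eq: "density A (indicator S) = density B (indicator S)"
  proof (rule measure_eqI)
    show "sets (density A (indicator S)) = sets (density B (indicator S))" using sA sB by simp
    fix X assume "X \<in> sets (density A (indicator S))"
    then have X: "X \<in> sets borel" using sA by simp
    have "emeasure (density A (indicator S)) X = emeasure A (S \<inter> X)"
      by (rule emeasure_restricted) (use S X sA in auto)
    also have "\<dots> = emeasure B (S \<inter> X)" using S X by (intro agree) auto
    also have "\<dots> = emeasure (density B (indicator S)) X"
      by (rule emeasure_restricted[symmetric]) (use S X sB in auto)
    finally show "emeasure (density A (indicator S)) X = emeasure (density B (indicator S)) X" .
  qed
  have "(\<integral>\<^sup>+ x. indicator S x * g x \<partial>A) = integral\<^sup>N (density A (indicator S)) g"
    by (rule nn_integral_density[symmetric]) (use S g sA in auto)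
  also have "\<dots> = integral\<^sup>N (density B (indicator S)) g" by (simp add: eq)
  also have "\<dots> = (\<integral>\<^sup>+ x. indicator S x * g x \<partial>B)"
    by (rule nn_integral_density) (use S g sB in auto)
  finally show ?thesis .
qed

lemma laplace_eq:
  assumes pM: "prob_measure_real M" and pM1: "prob_measure_real M1" and pN: "prob_measure_real \<nu>"
    and N0: "emeasure \<nu> {0<..} = 0"
    and conv: "convolution M \<nu> = convolution M1 \<nu>"
    and agree: "\<And>S. S \<in> sets borel \<Longrightarrow> S \<subseteq> {0..} \<Longrightarrow> emeasure M S = emeasure M1 S"
  shows "(\<integral>\<^sup>+ x. ennreal (indicator {..<0} x * exp x ^ k) \<partial>M) = (\<integral>\<^sup>+ x. ennreal (indicator {..<0} x * exp x ^ k) \<partial>M1)"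
proof -
  interpret N: prob_space \<nu> using pN unfolding prob_measure_real_def by auto
  have sN[measurable_cong]: "sets \<nu> = sets borel" using pmr_sets[OF pN] .
  define f where "f z = ennreal (indicator {..<0} z * exp z ^ k)" for z :: real
  have fm[measurable]: "f \<in> borel_measurable borel" unfolding f_def by measurable
  define G where "G x = (\<integral>\<^sup>+ y. f (x + y) \<partial>\<nu>)" for x
  have Gm[measurable]: "G \<in> borel_measurable borel" unfolding G_def by measurable
  define c where "c = (\<integral>\<^sup>+ y. ennreal (indicator {..0} y * exp y ^ k) \<partial>\<nu>)"
  have f_le: "f z \<le> 1" for z
    unfolding f_def by (auto simp: indicator_def power_le_one)
  have G_le: "G x \<le> 1" for x
  proof -
    have "G x \<le> (\<integral>\<^sup>+ y. 1 \<partial>\<nu>)" unfolding G_def by (rule nn_integral_mono) (rule f_le)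
    also have "\<dots> = 1" by (simp add: N.emeasure_space_1)
    finally show ?thesis .
  qed
  have c_le: "c \<le> 1"
  proof -
    have "c \<le> (\<integral>\<^sup>+ y. 1 \<partial>\<nu>)" unfolding c_def
      by (rule nn_integral_mono) (auto simp: indicator_def power_le_one)
    also have "\<dots> = 1" by (simp add: N.emeasure_space_1)
    finally show ?thesis .
  qed
  have c_pos: "c \<noteq> 0"
  proof
    assume "c = 0"
    then have "AE y in \<nu>. ennreal (indicator {..0} y * exp y ^ k) = 0"
      unfolding c_def by (subst (asm) nn_integral_0_iff_AE) auto
    then have "AE y in \<nu>. False" using AE_nonpos[OF pN N0]
      by eventually_elim (auto simp: indicator_def)
    then show False by (simp add: N.AE_False)
  qed
  have G_neg: "G x * indicator {..<0} x = c * ennreal (indicator {..<0} x * exp x ^ k)" for x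
  proof (cases "x < 0")
    case True
    have "G x = (\<integral>\<^sup>+ y. ennreal (exp x ^ k) * ennreal (indicator {..0} y * exp y ^ k) \<partial>\<nu>)"
      unfolding G_def
    proof (rule nn_integral_cong_AE)
      show "AE y in \<nu>. f (x + y) = ennreal (exp x ^ k) * ennreal (indicator {..0} y * exp y ^ k)"
        using AE_nonpos[OF pN N0]
      proof eventually_elim
        case (elim y)
        then have "x + y < 0" using True by simp
        then show ?case using elim
          by (simp add: f_def indicator_def exp_add power_mult_distrib ennreal_mult[symmetric])
      qed
    qed
    also have "\<dots> = ennreal (exp x ^ k) * c" unfolding c_def
      by (rule nn_integral_cmult) measurable
    finally show ?thesis using True by (simp add: indicator_def mult.commute)
  qed (simp add: indicator_def)
  have split: "(\<integral>\<^sup>+ x. f x \<partial>convolution M' \<nu>) =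
      (\<integral>\<^sup>+ x. indicator {0..} x * G x \<partial>M') + c * (\<integral>\<^sup>+ x. ennreal (indicator {..<0} x * exp x ^ k) \<partial>M')"
    if pM': "prob_measure_real M'" for M'
  proof -
    have sM'[measurable_cong]: "sets M' = sets borel" using pmr_sets[OF pM'] .
    have "(\<integral>\<^sup>+ x. f x \<partial>convolution M' \<nu>) = (\<integral>\<^sup>+ x. G x \<partial>M')"
      unfolding G_def
      by (rule nn_integral_convolution) (use pM' pN pmr_finite sN sM' in auto)
    also have "\<dots> = (\<integral>\<^sup>+ x. indicator {0..} x * G x + G x * indicator {..<0} x \<partial>M')"
      by (rule nn_integral_cong) (auto simp: indicator_def)
    also have "\<dots> = (\<integral>\<^sup>+ x. indicator {0..} x * G x \<partial>M') + (\<integral>\<^sup>+ x. G x * indicator {..<0} x \<partial>M')"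
      by (rule nn_integral_add) auto
    also have "(\<integral>\<^sup>+ x. G x * indicator {..<0} x \<partial>M') = (\<integral>\<^sup>+ x. c * ennreal (indicator {..<0} x * exp x ^ k) \<partial>M')"
      by (simp add: G_neg)
    also have "\<dots> = c * (\<integral>\<^sup>+ x. ennreal (indicator {..<0} x * exp x ^ k) \<partial>M')"
      by (rule nn_integral_cmult) measurable
    finally show ?thesis .
  qed
  have T_eq: "(\<integral>\<^sup>+ x. indicator {0..} x * G x \<partial>M) = (\<integral>\<^sup>+ x. indicator {0..} x * G x \<partial>M1)"
    by (rule agree_nn) (use pmr_sets[OF pM] pmr_sets[OF pM1] agree in auto)
  have T_fin: "(\<integral>\<^sup>+ x. indicator {0..} x * G x \<partial>M) \<noteq> \<infinity>"
  proof -
    interpret M: prob_space M using pM unfolding prob_measure_real_def by auto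
    have "(\<integral>\<^sup>+ x. indicator {0..} x * G x \<partial>M) \<le> (\<integral>\<^sup>+ x. 1 \<partial>M)"
      by (rule nn_integral_mono) (auto simp: indicator_def G_le)
    also have "\<dots> = 1" by (simp add: M.emeasure_space_1)
    finally show ?thesis by (auto simp: top_unique)
  qed
  have "c * (\<integral>\<^sup>+ x. ennreal (indicator {..<0} x * exp x ^ k) \<partial>M) = c * (\<integral>\<^sup>+ x. ennreal (indicator {..<0} x * exp x ^ k) \<partial>M1)"
    using split[OF pM] split[OF pM1] conv T_eq T_fin by (simp add: ennreal_add_left_cancel)
  moreover have "c \<noteq> top" using c_le by (auto simp: top_unique)
  ultimately show ?thesis using c_pos by (simp add: ennreal_mult_cancel_left)
qed



definition J :: "real measure \<Rightarrow> (real \<Rightarrow> real) \<Rightarrow> real" where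
  "J M h = (\<integral>x. indicator {..<0} x * h (exp x) \<partial>M)"

lemma J_integrable:
  fixes h :: "real \<Rightarrow> real"
  assumes pM: "prob_measure_real M" and h: "continuous_on UNIV h"
  shows "integrable M (\<lambda>x. indicator {..<0} x * h (exp x))"
proof -
  interpret M: prob_space M using pM unfolding prob_measure_real_def by auto
  have sM[measurable_cong]: "sets M = sets borel" using pmr_sets[OF pM] .
  have hm[measurable]: "h \<in> borel_measurable borel" using h by (rule borel_measurable_continuous_onI)
  have "compact (h ` {0..1})" using h by (intro compact_continuous_image) (auto intro: continuous_on_subset)
  then obtain B where B: "\<And>u. u \<in> {0..1} \<Longrightarrow> norm (h u) \<le> B"
    using compact_imp_bounded bounded_iff by (metis image_eqI)
  have bd: "AE x in M. norm (indicator {..<0} x * h (exp x)) \<le> B"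
    proof (rule AE_I2)
      fix x :: real
      show "norm (indicator {..<0} x * h (exp x)) \<le> B"
      proof (cases "x < 0")
        case True
        then have "exp x \<in> {0..1}" by auto
        then have "norm (h (exp x)) \<le> B" by (rule B)
        then show ?thesis using True by simp
      next
        case False
        have "0 \<le> B" using B[of 0] by (smt (verit) atLeastAtMost_iff norm_ge_zero)
        then show ?thesis using False by auto
      qed
    qed
  show ?thesis by (rule M.integrable_const_bound[OF bd]) measurable
qed

lemma J_power:
  assumes pM: "prob_measure_real M" and pM1: "prob_measure_real M1"
    and lap: "\<And>k. (\<integral>\<^sup>+ x. ennreal (indicator {..<0} x * exp x ^ k) \<partial>M) = (\<integral>\<^sup>+ x. ennreal (indicator {..<0} x * exp x ^ k) \<partial>M1)"
  shows "J M (\<lambda>u. u ^ k) = J M1 (\<lambda>u. u ^ k)"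
proof -
  have "J M' (\<lambda>u. u ^ k) = enn2real (\<integral>\<^sup>+ x. ennreal (indicator {..<0} x * exp x ^ k) \<partial>M')"
    if "prob_measure_real M'" for M'
  proof -
    have [measurable_cong]: "sets M' = sets borel" using pmr_sets[OF that] .
    show ?thesis unfolding J_def by (rule integral_eq_nn_integral) auto
  qed
  then show ?thesis using pM pM1 lap by simp
qed

lemma J_poly:
  assumes pM: "prob_measure_real M" and pM1: "prob_measure_real M1"
    and pw: "\<And>k. J M (\<lambda>u. u ^ k) = J M1 (\<lambda>u. u ^ k)"
  shows "J M (\<lambda>u. \<Sum>i\<le>n. a i * u ^ i) = J M1 (\<lambda>u. \<Sum>i\<le>n. a i * u ^ i)"
proof -
  have "J M' (\<lambda>u. \<Sum>i\<le>n. a i * u ^ i) = (\<Sum>i\<le>n. a i * J M' (\<lambda>u. u ^ i))"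
    if "prob_measure_real M'" for M'
  proof -
    have int: "integrable M' (\<lambda>x. indicator {..<0} x * exp x ^ i)" for i
      using J_integrable[OF that, of "\<lambda>u. u ^ i"] by (simp add: continuous_intros)
    have "J M' (\<lambda>u. \<Sum>i\<le>n. a i * u ^ i) = (\<integral>x. (\<Sum>i\<le>n. a i * (indicator {..<0} x * exp x ^ i)) \<partial>M')"
      unfolding J_def by (rule Bochner_Integration.integral_cong) (auto simp: sum_distrib_left ac_simps)
    also have "\<dots> = (\<Sum>i\<le>n. (\<integral>x. a i * (indicator {..<0} x * exp x ^ i) \<partial>M'))"
      by (rule Bochner_Integration.integral_sum) (use int in auto)
    also have "\<dots> = (\<Sum>i\<le>n. a i * J M' (\<lambda>u. u ^ i))"
      unfolding J_def by simp
    finally show ?thesis .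
  qed
  then show ?thesis using pM pM1 pw by simp
qed


lemma J_approx:
  fixes h g :: "real \<Rightarrow> real"
  assumes pM: "prob_measure_real M" and h: "continuous_on UNIV h" and g: "continuous_on UNIV g"
    and e: "\<And>u. u \<in> {0..1} \<Longrightarrow> \<bar>h u - g u\<bar> < e"
  shows "\<bar>J M h - J M g\<bar> \<le> e"
proof -
  interpret M: prob_space M using pM unfolding prob_measure_real_def by auto
  have sM[measurable_cong]: "sets M = sets borel" using pmr_sets[OF pM] .
  have e0: "0 \<le> e" using e[of 0] by auto
  have ih: "integrable M (\<lambda>x. indicator {..<0} x * h (exp x))" by (rule J_integrable[OF pM h])
  have ig: "integrable M (\<lambda>x. indicator {..<0} x * g (exp x))" by (rule J_integrable[OF pM g])
  have "J M h - J M g = (\<integral>x. indicator {..<0} x * h (exp x) - indicator {..<0} x * g (exp x) \<partial>M)"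
    unfolding J_def by (rule Bochner_Integration.integral_diff[symmetric, OF ih ig])
  also have "\<bar>\<dots>\<bar> \<le> (\<integral>x. e \<partial>M)"
  proof (rule integral_abs_bound_integral)
    show "integrable M (\<lambda>x. indicator {..<0} x * h (exp x) - indicator {..<0} x * g (exp x))"
      using ih ig by auto
    show "integrable M (\<lambda>x. e)" by auto
    fix x :: real
    show "\<bar>indicator {..<0} x * h (exp x) - indicator {..<0} x * g (exp x)\<bar> \<le> e"
    proof (cases "x < 0")
      case True
      then have "exp x \<in> {0..1}" by auto
      from e[OF this] show ?thesis using True by (simp add: less_imp_le)
    qed (use e0 in auto)
  qed
  also have "\<dots> = e" by (simp add: M.emeasure_space_1 measure_def)
  finally show ?thesis .
qed

lemma J_cont:
  fixes h :: "real \<Rightarrow> real"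
  assumes pM: "prob_measure_real M" and pM1: "prob_measure_real M1"
    and poly: "\<And>a n. J M (\<lambda>u. \<Sum>i\<le>n. a i * u ^ i) = J M1 (\<lambda>u. \<Sum>i\<le>n. a i * u ^ i)"
    and h: "continuous_on UNIV h"
  shows "J M h = J M1 h"
proof (rule ccontr)
  assume ne: "J M h \<noteq> J M1 h"
  define e where "e = \<bar>J M h - J M1 h\<bar> / 3"
  have e0: "e > 0" using ne unfolding e_def by auto
  obtain g where gp: "real_polynomial_function g" and ge: "\<And>u. u \<in> {0..1} \<Longrightarrow> \<bar>h u - g u\<bar> < e"
    using Stone_Weierstrass_real_polynomial_function[of "{0..1::real}" h e] h e0
    by (auto intro: continuous_on_subset)
  obtain a n where gs: "g = (\<lambda>x. \<Sum>i\<le>n. a i * x ^ i)"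
    using real_polynomial_function_imp_sum[OF gp] by blast
  have gc: "continuous_on UNIV g" unfolding gs by (intro continuous_intros)
  have "\<bar>J M h - J M g\<bar> \<le> e" by (rule J_approx[OF pM h gc ge])
  moreover have "\<bar>J M1 h - J M1 g\<bar> \<le> e" by (rule J_approx[OF pM1 h gc ge])
  moreover have "J M g = J M1 g" unfolding gs by (rule poly)
  ultimately have "\<bar>J M h - J M1 h\<bar> \<le> 2 * e" by linarith
  then show False using e0 unfolding e_def by simp
qed


definition fm :: "real \<Rightarrow> nat \<Rightarrow> real \<Rightarrow> real" where
  "fm a m u = max 0 (min 1 (1 - real m * (u - exp a)))"

lemma fm_cont: "continuous_on UNIV (fm a m)"
  unfolding fm_def by (intro continuous_intros)

lemma J_lim:
  assumes pM: "prob_measure_real M" and a: "a < 0"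
  shows "(\<lambda>m. J M (fm a m)) \<longlonglongrightarrow> measure M {..a}"
proof -
  interpret M: prob_space M using pM unfolding prob_measure_real_def by auto
  have sM[measurable_cong]: "sets M = sets borel" using pmr_sets[OF pM] .
  have fmm[measurable]: "fm a m \<in> borel_measurable borel" for m
    by (rule borel_measurable_continuous_onI[OF fm_cont])
  have "(\<lambda>m. \<integral>x. indicator {..<0} x * fm a m (exp x) \<partial>M) \<longlonglongrightarrow> (\<integral>x. indicator {..a} x \<partial>M)"
  proof (rule integral_dominated_convergence[where w="\<lambda>_. 1"])
    show "(\<lambda>x. indicator {..a} x :: real) \<in> borel_measurable M" by measurable
    show "(\<lambda>x. indicator {..<0} x * fm a m (exp x)) \<in> borel_measurable M" for m by measurable
    show "integrable M (\<lambda>_. 1::real)" by auto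
    show "AE x in M. norm (indicator {..<0} x * fm a m (exp x)) \<le> 1" for m
      by (rule AE_I2) (auto simp: fm_def indicator_def)
    show "AE x in M. (\<lambda>m. indicator {..<0} x * fm a m (exp x)) \<longlonglongrightarrow> indicator {..a} x"
    proof (rule AE_I2)
      fix x :: real
      show "(\<lambda>m. indicator {..<0} x * fm a m (exp x)) \<longlonglongrightarrow> indicator {..a} x"
      proof (cases "x \<le> a")
        case True
        then have "exp x \<le> exp a" by simp
        then have "real m * (exp x - exp a) \<le> 0" for m by (simp add: mult_nonneg_nonpos)
        then have "fm a m (exp x) = 1" for m unfolding fm_def by (simp add: max_def min_def)
        then show ?thesis using True a by (simp add: indicator_def)
      next
        case False
        then have d: "exp x - exp a > 0" by simp
        obtain N :: nat where N: "N > 1 / (exp x - exp a)" using reals_Archimedean2 by blast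
        have "eventually (\<lambda>m. indicator {..<0} x * fm a m (exp x) = 0) sequentially"
          unfolding eventually_sequentially
        proof (intro exI allI impI)
          fix m assume "N \<le> m"
          then have "real m > 1 / (exp x - exp a)" using N by linarith
          then have "real m * (exp x - exp a) > 1" using d by (simp add: field_simps)
          then show "indicator {..<0} x * fm a m (exp x) = 0" unfolding fm_def by (simp add: max_def min_def)
        qed
        then have "(\<lambda>m. indicator {..<0} x * fm a m (exp x)) \<longlonglongrightarrow> 0"
          by (rule tendsto_eventually)
        then show ?thesis using False by (simp add: indicator_def)
      qed
    qed
  qed
  then show ?thesis unfolding J_def by (simp add: sM)
qed



lemma halfline_compl:
  assumes pM: "prob_measure_real M"
  shows "emeasure M {x<..} = ennreal (1 - measure M {..x})"
proof -
  interpret M: prob_space M using pM unfolding prob_measure_real_def by auto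
  have sp: "space M = UNIV" by (rule pmr_space[OF pM])
  have "{x<..} = space M - {..x}" using sp by auto
  then have "measure M {x<..} = 1 - measure M {..x}"
    using M.prob_compl[of "{..x}"] pmr_sets[OF pM] by simp
  then show ?thesis by (simp add: M.emeasure_eq_measure)
qed

theorem theorem5p2:
  fixes \<mu> :: "real measure"
  assumes "prob_measure_real \<mu>"
    and "\<exists>\<nu>. prob_measure_real \<nu> \<and> measure_support \<nu> \<subseteq> {..0} \<and> convolution \<mu> \<nu> \<in> classC"
  shows "\<mu> \<in> classC"
proof -
  note p\<mu> = assms(1)
  obtain \<nu> where p\<nu>: "prob_measure_real \<nu>" and supp: "measure_support \<nu> \<subseteq> {..0}"
    and C: "convolution \<mu> \<nu> \<in> classC" using assms(2) by blast
  have N0: "emeasure \<nu> {0<..} = 0" by (rule support_null[OF p\<nu> supp])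
  have "\<mu>1 = \<mu>" if p1: "prob_measure_real \<mu>1"
    and H: "\<forall>n\<ge>1. \<forall>A\<in>sets borel. A \<subseteq> {0..} \<longrightarrow> emeasure (conv_power \<mu>1 n) A = emeasure (conv_power \<mu> n) A"
    for \<mu>1
  proof -
    have agree0: "emeasure \<mu>1 S = emeasure \<mu> S" if "S \<in> sets borel" "S \<subseteq> {0..}" for S
      using H[rule_format, of 1 S] that conv_return_right[OF p\<mu>] conv_return_right[OF p1] by simp
    have conveq: "convolution \<mu>1 \<nu> = convolution \<mu> \<nu>"
    proof -
      have "prob_measure_real (convolution \<mu>1 \<nu>)" by (rule pmr_conv[OF p1 p\<nu>])
      moreover have "\<forall>n\<ge>1. \<forall>A\<in>sets borel. A \<subseteq> {0..} \<longrightarrow>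
          emeasure (conv_power (convolution \<mu>1 \<nu>) n) A = emeasure (conv_power (convolution \<mu> \<nu>) n) A"
      proof (intro allI impI ballI)
        fix n :: nat and A :: "real set" assume n: "1 \<le> n" and A: "A \<in> sets borel" and A0: "A \<subseteq> {0..}"
        have "emeasure (conv_power (convolution \<mu>1 \<nu>) n) A = emeasure (convolution (conv_power \<mu>1 n) (conv_power \<nu> n)) A"
          by (simp add: conv_power_conv[OF p1 p\<nu>])
        also have "\<dots> = emeasure (convolution (conv_power \<mu> n) (conv_power \<nu> n)) A"
          by (rule agree_conv[OF pmr_power[OF p1] pmr_power[OF p\<mu>] pmr_power[OF p\<nu>] power_null[OF p\<nu> N0] _ A A0])
             (use H n in auto)
        also have "\<dots> = emeasure (conv_power (convolution \<mu> \<nu>) n) A"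
          by (simp add: conv_power_conv[OF p\<mu> p\<nu>])
        finally show "emeasure (conv_power (convolution \<mu>1 \<nu>) n) A = emeasure (conv_power (convolution \<mu> \<nu>) n) A" .
      qed
      ultimately show ?thesis using C unfolding classC_def by blast
    qed
    have lap: "(\<integral>\<^sup>+ x. ennreal (indicator {..<0} x * exp x ^ k) \<partial>\<mu>) = (\<integral>\<^sup>+ x. ennreal (indicator {..<0} x * exp x ^ k) \<partial>\<mu>1)" for k
      by (rule laplace_eq[OF p\<mu> p1 p\<nu> N0 conveq[symmetric]]) (simp add: agree0)
    have poly: "J \<mu> (\<lambda>u. \<Sum>i\<le>n. a i * u ^ i) = J \<mu>1 (\<lambda>u. \<Sum>i\<le>n. a i * u ^ i)" for a n
      by (rule J_poly[OF p\<mu> p1 J_power[OF p\<mu> p1 lap]])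
    have meq: "measure \<mu> {..a} = measure \<mu>1 {..a}" if a: "a < 0" for a
    proof -
      have "J \<mu> (fm a m) = J \<mu>1 (fm a m)" for m by (rule J_cont[OF p\<mu> p1 poly fm_cont])
      then have "(\<lambda>m. J \<mu> (fm a m)) \<longlonglongrightarrow> measure \<mu>1 {..a}" using J_lim[OF p1 a] by simp
      then show ?thesis using J_lim[OF p\<mu> a] LIMSEQ_unique by blast
    qed
    show "\<mu>1 = \<mu>"
    proof (rule measure_eqI_lessThan)
      show "sets \<mu>1 = sets borel" "sets \<mu> = sets borel" using pmr_sets p1 p\<mu> by auto
      fix x :: real
      interpret M1: prob_space \<mu>1 using p1 unfolding prob_measure_real_def by auto
      show "emeasure \<mu>1 {x<..} < \<infinity>" by (simp add: M1.emeasure_eq_measure)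
      show "emeasure \<mu>1 {x<..} = emeasure \<mu> {x<..}"
      proof (cases "x < 0")
        case True
        then show ?thesis using halfline_compl[OF p1] halfline_compl[OF p\<mu>] meq[OF True] by simp
      next
        case False
        then show ?thesis by (intro agree0) auto
      qed
    qed
  qed
  then show ?thesis unfolding classC_def using p\<mu> by blast
qed

end
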